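(* Let $\vec f=(f_1,\dots,f_n)$ be a profile of acknowledgement-based protocols. The following are equivalent: (i) $\vec f$ is an equilibrium; (ii) for every player $i\in[n]$ and every protocol $g_i\in\mathcal G_i^{\vec f}$, $C_i^{(\vec f_{-i},g_i)}(h_0)=\min_{f_i'}C_i^{(\vec f_{-i},f_i')}(h_0)=C_i^{\vec f}(h_0)$, where the minimum is over all protocols $f_i'$ of player $i$.
   Context: Contention game: $n$ players, channels $K=\{1,\dots,k\}$, slots $t=1,2,\dots$; each player has one packet, initially pending; in each slot a pending player chooses (possibly randomly) an action in $A=\{0,1,\dots,k\}$ ($0$ = idle, $a$ = transmit on channel $a$); a lone transmitter on a channel succeeds and leaves, colliding transmitters remain pending. $X_{i,t}$ is player $i$'s action at slot $t$, $h_{i,t}=(X_{i,1},\dots,X_{i,t})$ her personal history. Acknowledgement-based protocols: decision rules (distributions on $A$ at each slot) depend only on $h_{i,t-1}$; only transmitting players learn whether they succeeded. $T_i$ is player $i$'s latency; $C_i^{\vec f}(h_0)=\mathbb E[T_i\mid\vec f]$ is her unconditional expected latency under profile $\vec f$, and $(\vec f_{-i},g_i)$ denotes the profile with $f_i$ replaced by $g_i$. $\vec f$ is an equilibrium if for every $i$, slot $t$ and history, player $i$ cannot decrease her conditional expected latency by unilaterally deviating after $t$. For $\tau^*\ge1$ and a history $h_{i,\tau^*}=(a_{i,1},\dots,a_{i,\tau^*})$, $g_i(h_{i,\tau^*})$ is the protocol that plays $a_{i,t}$ with probability $1$ at each slot $1\le t\le\tau^*$ and follows $f_{i,t}$ for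 $t>\tau^*$. A history $h_{i,\tau^*}$ is consistent with $\vec f$ if it occurs with positive probability for player $i$ under $\vec f$; $\mathcal G_i^{\vec f}$ is the set of all protocols $g_i(h_{i,\tau^*})$, over all $\tau^*\ge1$, with $h_{i,\tau^*}$ consistent with $\vec f$. *)

theory Defs
  imports "HOL-Probability.Probability"
begin

text \<open>
Players are 0,...,n-1; actions are natural numbers, 0 = idle,
a in {1..k} = transmit on channel a.
A protocol (acknowledgement-based) maps the player's personal history (list of her own
past actions, oldest first) to a distribution over actions for the next slot;
the slot index is the length of the history plus one.
A game state is a pair (pending set, personal histories).
\<close>

type_synonym protocol = "nat list \<Rightarrow> nat pmf"
type_synonym gstate = "nat set \<times> (nat \<Rightarrow> nat list)"

definition is_protocol :: "nat \<Rightarrow> protocol \<Rightarrow> bool" where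
  "is_protocol k p \<longleftrightarrow> (\<forall>h. set_pmf (p h) \<subseteq> {0..k})"

definition succeeds :: "nat set \<Rightarrow> (nat \<Rightarrow> nat) \<Rightarrow> nat \<Rightarrow> bool" where
  "succeeds P a i \<longleftrightarrow> i \<in> P \<and> a i \<noteq> 0 \<and> (\<forall>j\<in>P. j \<noteq> i \<longrightarrow> a j \<noteq> a i)"

definition step :: "(nat \<Rightarrow> protocol) \<Rightarrow> gstate \<Rightarrow> gstate pmf" where
  "step f s = map_pmf
     (\<lambda>a. (fst s - {i. succeeds (fst s) a i},
           \<lambda>i. if i \<in> fst s then snd s i @ [a i] else snd s i))
     (Pi_pmf (fst s) 0 (\<lambda>i. f i (snd s i)))"

fun state_dist :: "nat \<Rightarrow> (nat \<Rightarrow> protocol) \<Rightarrow> nat \<Rightarrow> gstate pmf" where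
  "state_dist n f 0 = return_pmf ({..<n}, \<lambda>_. [])"
| "state_dist n f (Suc t) = bind_pmf (state_dist n f t) (step f)"

text \<open>Player i is still pending after s slots (i.e. T_i > s); this can be read off any
later state, because personal histories only grow.\<close>
definition pending_after :: "nat \<Rightarrow> nat \<Rightarrow> gstate \<Rightarrow> bool" where
  "pending_after i s st \<longleftrightarrow> i \<in> fst st \<or> s < length (snd st i)"

definition has_history :: "nat \<Rightarrow> nat list \<Rightarrow> gstate \<Rightarrow> bool" where
  "has_history i h st \<longleftrightarrow> take (length h) (snd st i) = h"

definition hist_prob :: "nat \<Rightarrow> (nat \<Rightarrow> protocol) \<Rightarrow> nat \<Rightarrow> nat list \<Rightarrow> real" where
  "hist_prob n f i h = measure_pmf.prob (state_dist n f (length h)) {st. has_history i h st}"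

text \<open>Unconditional expected latency  C_i^f(h_0) = E[T_i] = sum_{s>=0} P(T_i > s).\<close>
definition exp_latency :: "nat \<Rightarrow> (nat \<Rightarrow> protocol) \<Rightarrow> nat \<Rightarrow> ennreal" where
  "exp_latency n f i = (\<Sum>s. ennreal (measure_pmf.prob (state_dist n f s) {st. pending_after i s st}))"

text \<open>Conditional expected latency E[T_i | H_{i,t} = h], t = length h:
  E[T_i 1{H_{i,t}=h}] / P(H_{i,t}=h).\<close>
definition cond_latency :: "nat \<Rightarrow> (nat \<Rightarrow> protocol) \<Rightarrow> nat \<Rightarrow> nat list \<Rightarrow> ennreal" where
  "cond_latency n f i h =
     (\<Sum>s. ennreal (measure_pmf.prob (state_dist n f (max s (length h)))
               {st. has_history i h st \<and> pending_after i s st}))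
     / ennreal (hist_prob n f i h)"

definition consistent :: "nat \<Rightarrow> (nat \<Rightarrow> protocol) \<Rightarrow> nat \<Rightarrow> nat list \<Rightarrow> bool" where
  "consistent n f i h \<longleftrightarrow> hist_prob n f i h > 0"

definition equilibrium :: "nat \<Rightarrow> nat \<Rightarrow> (nat \<Rightarrow> protocol) \<Rightarrow> bool" where
  "equilibrium n k f \<longleftrightarrow>
     (\<forall>i<n. \<forall>h. consistent n f i h \<longrightarrow>
        (\<forall>g. is_protocol k g \<and> (\<forall>h'. length h' < length h \<longrightarrow> g h' = f i h') \<longrightarrow>
             cond_latency n f i h \<le> cond_latency n (f(i := g)) i h))"

definition replay :: "(nat \<Rightarrow> protocol) \<Rightarrow> nat \<Rightarrow> nat list \<Rightarrow> protocol" where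
  "replay f i h = (\<lambda>h'. if length h' < length h then return_pmf (h ! length h') else f i h')"

definition G_set :: "nat \<Rightarrow> (nat \<Rightarrow> protocol) \<Rightarrow> nat \<Rightarrow> protocol set" where
  "G_set n f i = {replay f i h | h. h \<noteq> [] \<and> consistent n f i h}"

end

theory Submission
  imports Defs
begin

lemma step_cong:
  assumes "\<And>j. j \<in> fst st \<Longrightarrow> F j (snd st j) = F' j (snd st j)"
  shows "step F st = step F' st"
  unfolding step_def using assms by (intro arg_cong[where f="map_pmf _"] Pi_pmf_cong) auto

lemma set_step:
  assumes "finite (fst st)" "st' \<in> set_pmf (step F st)"
  shows "\<exists>a. (\<forall>j\<in>fst st. a j \<in> set_pmf (F j (snd st j))) \<and>
     st' = (fst st - {i. succeeds (fst st) a i}, \<lambda>i. if i \<in> fst st then snd st i @ [a i] else snd st i)"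
  using assms unfolding step_def by (auto simp: set_Pi_pmf PiE_dflt_def)

lemma inv_basic:
  "st \<in> set_pmf (state_dist n F s) \<Longrightarrow>
    fst st \<subseteq> {..<n} \<and> (\<forall>j\<in>fst st. length (snd st j) = s) \<and> (\<forall>j. length (snd st j) \<le> s)"
proof (induction s arbitrary: st)
  case 0
  then show ?case by auto
next
  case (Suc s)
  then obtain st0 where st0: "st0 \<in> set_pmf (state_dist n F s)" "st \<in> set_pmf (step F st0)" by auto
  note IH = Suc.IH[OF st0(1)]
  then have "finite (fst st0)" using finite_subset by blast
  from set_step[OF this st0(2)] obtain a where
    st: "st = (fst st0 - {i. succeeds (fst st0) a i}, \<lambda>i. if i \<in> fst st0 then snd st0 i @ [a i] else snd st0 i)"
    by blast
  show ?case using IH unfolding st by (auto simp: le_Suc_eq)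
qed

lemma L2:
  "(\<And>j h'. length h' < s \<Longrightarrow> F j h' = F' j h') \<Longrightarrow> state_dist n F s = state_dist n F' s"
proof (induction s)
  case 0
  then show ?case by simp
next
  case (Suc s)
  have "state_dist n F s = state_dist n F' s" using Suc by auto
  moreover have "step F st = step F' st" if "st \<in> set_pmf (state_dist n F' s)" for st
    using inv_basic[OF that] Suc.prems by (intro step_cong) auto
  ultimately show ?case by (auto intro: bind_pmf_cong)
qed

definition rp :: "protocol \<Rightarrow> nat list \<Rightarrow> protocol" where
  "rp q h = (\<lambda>h'. if length h' < length h then return_pmf (h ! length h') else q h')"

lemma rp_Nil[simp]: "rp q [] = q" by (auto simp: rp_def)

lemma I2:
  "st \<in> set_pmf (state_dist n (F(i:=rp q h)) s) \<Longrightarrow> take (length h) (snd st i) = take (length (snd st i)) h"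
proof (induction s arbitrary: st)
  case 0
  then show ?case by auto
next
  case (Suc s)
  then obtain st0 where st0: "st0 \<in> set_pmf (state_dist n (F(i:=rp q h)) s)" "st \<in> set_pmf (step (F(i:=rp q h)) st0)"
    by (simp only: state_dist.simps set_bind_pmf) blast
  note IH = Suc.IH[OF st0(1)]
  note B = inv_basic[OF st0(1)]
  then have "finite (fst st0)" using finite_subset by blast
  from set_step[OF this st0(2)] obtain a where
    a: "\<forall>j\<in>fst st0. a j \<in> set_pmf ((F(i:=rp q h)) j (snd st0 j))" and
    st: "st = (fst st0 - {i. succeeds (fst st0) a i}, \<lambda>i. if i \<in> fst st0 then snd st0 i @ [a i] else snd st0 i)"
    by blast
  show ?case
  proof (cases "i \<in> fst st0")
    case False
    then show ?thesis using IH st by simp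
  next
    case True
    then have len: "length (snd st0 i) = s" using B by auto
    have ai: "a i \<in> set_pmf (rp q h (snd st0 i))" using a True by auto
    show ?thesis
    proof (cases "s < length h")
      case True
      then have "a i = h ! s" using ai len by (auto simp: rp_def)
      moreover have "snd st0 i = take s h" using IH len True by auto
      ultimately show ?thesis using st \<open>i \<in> fst st0\<close> True len
        by (simp add: take_Suc_conv_app_nth)
    next
      case False
      then show ?thesis using st \<open>i \<in> fst st0\<close> len IH by auto
    qed
  qed
qed

lemma Pi_pmf_split:
  assumes "finite P" "i \<in> P"
  shows "Pi_pmf P d g = bind_pmf (g i) (\<lambda>b. Pi_pmf P d (g(i := return_pmf b)))"
proof -
  have P: "P = insert i (P - {i})" using assms by auto
  have "Pi_pmf P d (g(i := return_pmf b)) = bind_pmf (Pi_pmf (P - {i}) d g) (\<lambda>f. return_pmf (f(i := b)))" for b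
  proof -
    have "Pi_pmf P d (g(i := return_pmf b)) =
        do {y \<leftarrow> return_pmf b; f \<leftarrow> Pi_pmf (P - {i}) d (g(i := return_pmf b)); return_pmf (f(i := y))}"
      by (subst P, subst Pi_pmf_insert') (use assms in auto)
    also have "Pi_pmf (P - {i}) d (g(i := return_pmf b)) = Pi_pmf (P - {i}) d g"
      by (intro Pi_pmf_cong) auto
    finally show ?thesis by (simp add: bind_return_pmf fun_upd_def)
  qed
  moreover have "Pi_pmf P d g = do {y \<leftarrow> g i; f \<leftarrow> Pi_pmf (P - {i}) d g; return_pmf (f(i := y))}"
    by (subst P, subst Pi_pmf_insert') (use assms in auto)
  ultimately show ?thesis by simp
qed

lemma rp_below: "length h' < length h0 \<Longrightarrow> rp q h0 h' = rp q (h0 @ [b]) h'"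
  by (auto simp: rp_def nth_append)

lemma M_below:
  assumes "s \<le> length h0"
  shows "state_dist n (F(i := rp q h0)) s = state_dist n (F(i := rp q (h0@[b]))) s"
  using assms by (intro L2) (auto simp: rp_below)

lemma hist_eq:
  assumes "st \<in> set_pmf (state_dist n (F(i:=rp q h)) s)" "i \<in> fst st" "length h \<le> s"
  shows "take (length h) (snd st i) = h"
  using I2[OF assms(1)] inv_basic[OF assms(1)] assms(2,3) by auto

lemma M:
  "state_dist n (F(i := rp q h0)) s = bind_pmf (q h0) (\<lambda>b. state_dist n (F(i := rp q (h0@[b]))) s)"
proof (induction s)
  case 0
  then show ?case using M_below[of 0 h0 n F i q] by simp
next
  case (Suc s)
  define t where "t = length h0"
  consider "Suc s \<le> t" | "s = t" | "s > t" by linarith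
  then show ?case
  proof cases
    case 1
    then have "state_dist n (F(i := rp q (h0@[b]))) (Suc s) = state_dist n (F(i := rp q h0)) (Suc s)" for b
      using M_below[of "Suc s" h0 n F i q b] by (simp add: t_def del: state_dist.simps)
    then show ?thesis by (simp only: bind_pmf_const)
  next
    case 2
    let ?Fq = "F(i := rp q h0)" and ?Fb = "\<lambda>b. F(i := rp q (h0@[b]))"
    have e: "state_dist n (?Fb b) t = state_dist n ?Fq t" for b using M_below[of t h0 n F i q b] by (simp add: t_def)
    have key: "step ?Fq st = bind_pmf (q h0) (\<lambda>b. step (?Fb b) st)"
      if st: "st \<in> set_pmf (state_dist n ?Fq t)" for st
    proof (cases "i \<in> fst st")
      case False
      then have "step (?Fb b) st = step ?Fq st" for b by (intro step_cong) auto
      then show ?thesis by simp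
    next
      case True
      have hi: "snd st i = h0" using hist_eq[OF st True] inv_basic[OF st] True by (auto simp: t_def)
      have fin: "finite (fst st)" using inv_basic[OF st] finite_subset by blast
      define g where "g = (\<lambda>j. ?Fq j (snd st j))"
      have gi: "g i = q h0" using hi by (simp add: g_def rp_def)
      have gb: "(\<lambda>j. ?Fb b j (snd st j)) = g(i := return_pmf b)" for b
        using hi by (auto simp: g_def rp_def fun_eq_iff)
      show ?thesis unfolding step_def g_def[symmetric] gb
        by (subst Pi_pmf_split[OF fin True]) (simp add: gi map_bind_pmf)
    qed
    have "state_dist n ?Fq (Suc s) = bind_pmf (state_dist n ?Fq t) (step ?Fq)" using 2 by simp
    also have "\<dots> = bind_pmf (state_dist n ?Fq t) (\<lambda>st. bind_pmf (q h0) (\<lambda>b. step (?Fb b) st))"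
      using key by (intro bind_pmf_cong) auto
    also have "\<dots> = bind_pmf (q h0) (\<lambda>b. bind_pmf (state_dist n ?Fq t) (step (?Fb b)))"
      by (rule bind_commute_pmf)
    also have "\<dots> = bind_pmf (q h0) (\<lambda>b. state_dist n (?Fb b) (Suc s))"
      using 2 e by simp
    finally show ?thesis .
  next
    case 3
    let ?Fq = "F(i := rp q h0)" and ?Fb = "\<lambda>b. F(i := rp q (h0@[b]))"
    have st_eq: "bind_pmf (state_dist n (?Fb b) s) (step ?Fq) = bind_pmf (state_dist n (?Fb b) s) (step (?Fb b))" for b
    proof (intro bind_pmf_cong refl step_cong)
      fix st j assume st: "st \<in> set_pmf (state_dist n (?Fb b) s)" and j: "j \<in> fst st"
      then have "length (snd st j) = s" using inv_basic[OF st] by auto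
      then show "?Fq j (snd st j) = ?Fb b j (snd st j)" using 3 by (auto simp: rp_def t_def)
    qed
    have "state_dist n ?Fq (Suc s) = bind_pmf (bind_pmf (q h0) (\<lambda>b. state_dist n (?Fb b) s)) (step ?Fq)"
      using Suc.IH by (simp only: state_dist.simps)
    also have "\<dots> = bind_pmf (q h0) (\<lambda>b. state_dist n (?Fb b) (Suc s))"
      by (simp add: bind_assoc_pmf st_eq)
    finally show ?thesis .
  qed
qed

definition w :: "protocol \<Rightarrow> nat list \<Rightarrow> real" where
  "w q h = (\<Prod>j<length h. pmf (q (take j h)) (h ! j))"

lemma w_Nil[simp]: "w q [] = 1" by (simp add: w_def)

lemma w_snoc: "w q (h @ [a]) = w q h * pmf (q h) a"
  unfolding w_def by (simp add: nth_append)

lemma w_nonneg: "w q h \<ge> 0" unfolding w_def by (simp add: prod_nonneg)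

lemma emeasure_zero_pmf:
  assumes "\<And>st. st \<in> set_pmf M \<Longrightarrow> st \<in> A \<Longrightarrow> False"
  shows "emeasure (measure_pmf M) A = 0"
proof -
  have "A \<inter> set_pmf M = {}" using assms by auto
  then show ?thesis using emeasure_Int_set_pmf[of M A] by simp
qed

lemma W:
  "length h \<le> s \<Longrightarrow> emeasure (state_dist n (F(i:=q)) s) {st. has_history i h st \<and> X st} =
    ennreal (w q h) * emeasure (state_dist n (F(i:=rp q h)) s) {st. has_history i h st \<and> X st}"
proof (induction h arbitrary: s X rule: rev_induct)
  case Nil
  then show ?case by simp
next
  case (snoc a h0)
  define t where "t = length h0"
  define S where "S = {st. has_history i (h0 @ [a]) st \<and> X st}"
  have hh: "has_history i (h0 @ [a]) st \<Longrightarrow> has_history i h0 st" for st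
  proof -
    assume "has_history i (h0 @ [a]) st"
    then have "take (Suc t) (snd st i) = h0 @ [a]" by (simp add: has_history_def t_def)
    then have "take t (take (Suc t) (snd st i)) = h0" by (simp add: t_def)
    then show ?thesis by (simp add: has_history_def t_def min_def)
  qed
  have S_eq: "S = {st. has_history i h0 st \<and> (has_history i (h0 @ [a]) st \<and> X st)}"
    using hh unfolding S_def by blast
  have s: "length h0 \<le> s" using snoc.prems by simp
  have zero: "emeasure (state_dist n (F(i := rp q (h0@[b]))) s) S = 0" if "b \<noteq> a" for b
  proof (rule emeasure_zero_pmf)
    fix st assume st: "st \<in> set_pmf (state_dist n (F(i := rp q (h0@[b]))) s)" and "st \<in> S"
    then have tk: "take (Suc t) (snd st i) = h0 @ [a]" by (simp add: S_def has_history_def t_def)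
    moreover have "length (snd st i) \<ge> Suc t"
      using arg_cong[OF tk, of length] by (simp add: t_def)
    moreover have "take (Suc t) (snd st i) = take (length (snd st i)) (h0 @ [b])"
      using I2[OF st] by (simp add: t_def)
    ultimately show False using that by (simp add: t_def)
  qed
  have "emeasure (state_dist n (F(i:=q)) s) S = ennreal (w q h0) * emeasure (state_dist n (F(i:=rp q h0)) s) S"
    unfolding S_eq by (rule snoc.IH[OF s])
  also have "emeasure (state_dist n (F(i:=rp q h0)) s) S =
      (\<integral>\<^sup>+b. emeasure (state_dist n (F(i := rp q (h0@[b]))) s) S \<partial>q h0)"
    by (subst M) simp
  also have "\<dots> = (\<integral>\<^sup>+b. emeasure (state_dist n (F(i := rp q (h0@[a]))) s) S * indicator {a} b \<partial>q h0)"
    using zero by (intro nn_integral_cong) (auto simp: indicator_def)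
  also have "\<dots> = emeasure (state_dist n (F(i := rp q (h0@[a]))) s) S * pmf (q h0) a"
    by (subst nn_integral_cmult_indicator) (auto simp: emeasure_pmf_single)
  moreover have "ennreal (w q (h0@[a])) = ennreal (w q h0) * ennreal (pmf (q h0) a)"
    by (simp add: w_snoc ennreal_mult w_nonneg)
  ultimately show ?case unfolding S_def by (simp only: mult.assoc mult.commute[of "emeasure _ _" "ennreal (pmf _ _)"])
qed

lemma emeasure_one_pmf:
  assumes "\<And>x. x \<in> set_pmf M \<Longrightarrow> x \<in> A"
  shows "emeasure (measure_pmf M) A = 1"
  by (rule measure_pmf.emeasure_eq_1_AE) (use assms in \<open>auto simp: AE_measure_pmf_iff\<close>)

lemma pend_step:
  assumes st: "st \<in> set_pmf (state_dist n F s')" and "s \<le> s'" and st': "st' \<in> set_pmf (step F st)"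
  shows "pending_after i s st' \<longleftrightarrow> pending_after i s st"
proof -
  note B = inv_basic[OF st]
  then have "finite (fst st)" using finite_subset by blast
  from set_step[OF this st'] obtain a where
    a: "st' = (fst st - {i. succeeds (fst st) a i}, \<lambda>i. if i \<in> fst st then snd st i @ [a i] else snd st i)"
    by blast
  show ?thesis using B assms(2) unfolding a pending_after_def by auto
qed

lemma PA:
  assumes "s \<le> s'"
  shows "emeasure (state_dist n F s') {st. pending_after i s st} = emeasure (state_dist n F s) {st. pending_after i s st}"
  using assms
proof (induction s' rule: dec_induct)
  case base
  then show ?case by simp
next
  case (step m)
  have "emeasure (state_dist n F (Suc m)) {st. pending_after i s st} =
     (\<integral>\<^sup>+st. emeasure (step F st) {st. pending_after i s st} \<partial>state_dist n F m)" by simp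
  also have "\<dots> = (\<integral>\<^sup>+st. indicator {st. pending_after i s st} st \<partial>state_dist n F m)"
  proof (intro nn_integral_cong_AE, unfold AE_measure_pmf_iff, intro ballI)
    fix st assume st: "st \<in> set_pmf (state_dist n F m)"
    show "emeasure (step F st) {st. pending_after i s st} = indicator {st. pending_after i s st} st"
    proof (cases "pending_after i s st")
      case True
      then show ?thesis using pend_step[OF st step(1)] by (auto intro!: emeasure_one_pmf)
    next
      case False
      then show ?thesis using pend_step[OF st step(1)] by (auto intro!: emeasure_zero_pmf)
    qed
  qed
  also have "\<dots> = emeasure (state_dist n F m) {st. pending_after i s st}" by simp
  finally show ?case using step by simp
qed

lemma exp_eq: "exp_latency n F i = (\<Sum>s. emeasure (state_dist n F s) {st. pending_after i s st})"
  unfolding exp_latency_def by (simp add: measure_pmf.emeasure_eq_measure)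

lemma exp_split:
  "exp_latency n F i =
     (\<Sum>s. emeasure (state_dist n F (max s t)) {st. has_history i h st \<and> pending_after i s st}) +
     (\<Sum>s. emeasure (state_dist n F (max s t)) {st. \<not> has_history i h st \<and> pending_after i s st})"
proof -
  have "emeasure (state_dist n F s) {st. pending_after i s st} =
     emeasure (state_dist n F (max s t)) {st. has_history i h st \<and> pending_after i s st} +
     emeasure (state_dist n F (max s t)) {st. \<not> has_history i h st \<and> pending_after i s st}" for s
  proof -
    have 1: "emeasure (state_dist n F s) {st. pending_after i s st} = emeasure (state_dist n F (max s t)) {st. pending_after i s st}"
      by (rule PA[symmetric]) simp
    have 2: "{st. pending_after i s st} = {st. has_history i h st \<and> pending_after i s st} \<union> {st. \<not> has_history i h st \<and> pending_after i s st}"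
      by auto
    have 3: "emeasure (state_dist n F (max s t)) ({st. has_history i h st \<and> pending_after i s st} \<union> {st. \<not> has_history i h st \<and> pending_after i s st}) =
      emeasure (state_dist n F (max s t)) {st. has_history i h st \<and> pending_after i s st} +
     emeasure (state_dist n F (max s t)) {st. \<not> has_history i h st \<and> pending_after i s st}"
      by (rule plus_emeasure[symmetric]) auto
    show ?thesis using 1 3 2 by simp
  qed
  then show ?thesis unfolding exp_eq by (simp add: suminf_add summableI)
qed

lemma cond_eq:
  "cond_latency n F i h =
    (\<Sum>s. emeasure (state_dist n F (max s (length h))) {st. has_history i h st \<and> pending_after i s st})
    / emeasure (state_dist n F (length h)) {st. has_history i h st}"
  unfolding cond_latency_def hist_prob_def by (simp add: measure_pmf.emeasure_eq_measure)

lemma A_zero: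
  assumes "length h \<le> s"
  shows "emeasure (state_dist n (F(i:=rp q h)) s) {st. \<not> has_history i h st \<and> pending_after i s st} = 0"
proof (rule emeasure_zero_pmf)
  fix st assume st: "st \<in> set_pmf (state_dist n (F(i:=rp q h)) s)"
    and "st \<in> {st. \<not> has_history i h st \<and> pending_after i s st}"
  then have nh: "\<not> has_history i h st" and p: "pending_after i s st" by auto
  note B = inv_basic[OF st]
  show False
  proof (cases "i \<in> fst st")
    case True
    then show False using hist_eq[OF st True assms] nh by (simp add: has_history_def)
  next
    case False
    then show False using p B by (auto simp: pending_after_def dest: spec[of _ i])
  qed
qed

lemma core_ii_i:
  assumes agree: "\<And>h'. length h' < length h \<Longrightarrow> g h' = f i h'"
    and min: "exp_latency n (f(i := rp (f i) h)) i \<le> exp_latency n (f(i := rp g h)) i"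
  shows "cond_latency n f i h \<le> cond_latency n (f(i:=g)) i h"
proof -
  define t where "t = length h"
  define R where "R = f(i := rp (f i) h)"
  define P where "P = f(i := rp g h)"
  define H where "H = (\<lambda>s. {st. has_history i h st \<and> pending_after i s st})"
  define NH where "NH = (\<lambda>s. {st. \<not> has_history i h st \<and> pending_after i s st})"
  have wg: "w g h = w (f i) h" unfolding w_def by (intro prod.cong refl) (simp add: agree)
  define ww where "ww = ennreal (w (f i) h)"
  have W1: "emeasure (state_dist n f s) {st. has_history i h st \<and> X st} =
      ww * emeasure (state_dist n R s) {st. has_history i h st \<and> X st}" if "t \<le> s" for s X
    using W[of h s n f i "f i" X] that unfolding ww_def R_def t_def by (simp only: fun_upd_triv)
  have W2: "emeasure (state_dist n (f(i:=g)) s) {st. has_history i h st \<and> X st} =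
      ww * emeasure (state_dist n P s) {st. has_history i h st \<and> X st}" if "t \<le> s" for s X
    using W[of h s n f i g X, OF that[unfolded t_def]] unfolding ww_def P_def wg .
  have eqt: "state_dist n R t = state_dist n P t"
    unfolding R_def P_def t_def by (intro L2) (auto simp: rp_def)
  have hpf: "emeasure (state_dist n f t) {st. has_history i h st} = ww * emeasure (state_dist n R t) {st. has_history i h st}"
    using W1[of t "\<lambda>_. True"] by simp
  have hpg: "emeasure (state_dist n (f(i:=g)) t) {st. has_history i h st} = ww * emeasure (state_dist n R t) {st. has_history i h st}"
    using W2[of t "\<lambda>_. True"] eqt by simp
  have Nf: "(\<Sum>s. emeasure (state_dist n f (max s t)) (H s)) = ww * (\<Sum>s. emeasure (state_dist n R (max s t)) (H s))"
  proof -
    have "emeasure (state_dist n f (max s t)) (H s) = ww * emeasure (state_dist n R (max s t)) (H s)" for s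
      using W1[of "max s t" "\<lambda>st. pending_after i s st"] unfolding H_def by simp
    then show ?thesis by (simp only: ennreal_suminf_cmult)
  qed
  have Ng: "(\<Sum>s. emeasure (state_dist n (f(i:=g)) (max s t)) (H s)) = ww * (\<Sum>s. emeasure (state_dist n P (max s t)) (H s))"
  proof -
    have "emeasure (state_dist n (f(i:=g)) (max s t)) (H s) = ww * emeasure (state_dist n P (max s t)) (H s)" for s
      using W2[of "max s t" "\<lambda>st. pending_after i s st"] unfolding H_def by simp
    then show ?thesis by (simp only: ennreal_suminf_cmult)
  qed
  have Aeq: "emeasure (state_dist n R (max s t)) (NH s) = emeasure (state_dist n P (max s t)) (NH s)" for s
  proof (cases "s < t")
    case True
    then show ?thesis using eqt by (simp add: max_def)
  next
    case False
    then show ?thesis unfolding R_def P_def NH_def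
      using A_zero[of h s n f i "f i"] A_zero[of h s n f i g] by (simp add: t_def)
  qed
  have Afin: "(\<Sum>s. emeasure (state_dist n R (max s t)) (NH s)) \<noteq> \<infinity>"
  proof -
    have "(\<Sum>s. emeasure (state_dist n R (max s t)) (NH s)) = (\<Sum>s<t. emeasure (state_dist n R (max s t)) (NH s))"
    proof (rule suminf_finite)
      fix s assume "s \<notin> {..<t}"
      then show "emeasure (state_dist n R (max s t)) (NH s) = 0"
        unfolding R_def NH_def using A_zero[of h s n f i "f i"] by (simp add: t_def)
    qed simp
    then show ?thesis by (simp add: measure_pmf.emeasure_finite)
  qed
  have ER: "exp_latency n R i = (\<Sum>s. emeasure (state_dist n R (max s t)) (H s)) + (\<Sum>s. emeasure (state_dist n R (max s t)) (NH s))"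
    unfolding H_def NH_def by (rule exp_split)
  have EP: "exp_latency n P i = (\<Sum>s. emeasure (state_dist n P (max s t)) (H s)) + (\<Sum>s. emeasure (state_dist n R (max s t)) (NH s))"
    using exp_split[of n P i t h] Aeq unfolding H_def NH_def by simp
  have "(\<Sum>s. emeasure (state_dist n R (max s t)) (H s)) \<le> (\<Sum>s. emeasure (state_dist n P (max s t)) (H s))"
  proof -
    have "(\<Sum>s. emeasure (state_dist n R (max s t)) (NH s)) + (\<Sum>s. emeasure (state_dist n R (max s t)) (H s)) \<le>
          (\<Sum>s. emeasure (state_dist n R (max s t)) (NH s)) + (\<Sum>s. emeasure (state_dist n P (max s t)) (H s))"
      using min unfolding R_def[symmetric] P_def[symmetric] ER EP by (simp only: add.commute)
    then show ?thesis using Afin by (simp only: ennreal_add_left_cancel_le) simp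
  qed
  then have "ww * (\<Sum>s. emeasure (state_dist n R (max s t)) (H s)) / (ww * emeasure (state_dist n R t) {st. has_history i h st})
     \<le> ww * (\<Sum>s. emeasure (state_dist n P (max s t)) (H s)) / (ww * emeasure (state_dist n R t) {st. has_history i h st})"
    by (intro divide_right_mono_ennreal mult_left_mono) auto
  moreover have c1: "cond_latency n f i h = (\<Sum>s. emeasure (state_dist n f (max s t)) (H s)) / emeasure (state_dist n f t) {st. has_history i h st}"
    unfolding cond_eq H_def t_def ..
  moreover have c2: "cond_latency n (f(i:=g)) i h = (\<Sum>s. emeasure (state_dist n (f(i:=g)) (max s t)) (H s)) / emeasure (state_dist n (f(i:=g)) t) {st. has_history i h st}"
    unfolding cond_eq H_def t_def ..
  ultimately show ?thesis by (simp only: Nf Ng hpf hpg)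
qed

lemma M_exp:
  "exp_latency n (F(i := rp q h0)) j = (\<integral>\<^sup>+b. exp_latency n (F(i := rp q (h0@[b]))) j \<partial>q h0)"
proof -
  have "emeasure (state_dist n (F(i := rp q h0)) s) {st. pending_after j s st} =
     (\<integral>\<^sup>+b. emeasure (state_dist n (F(i := rp q (h0@[b]))) s) {st. pending_after j s st} \<partial>q h0)" for s
    by (simp only: M[of n F i q h0 s] emeasure_bind_pmf)
  then show ?thesis unfolding exp_eq
    by (simp add: nn_integral_suminf)
qed

lemma rp_protocol: "is_protocol k q \<Longrightarrow> set h \<subseteq> {0..k} \<Longrightarrow> is_protocol k (rp q h)"
proof -
  assume q: "is_protocol k q" and h: "set h \<subseteq> {0..k}"
  have "h ! length h' \<in> {0..k}" if "length h' < length h" for h'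
    using nth_mem[OF that] h by blast
  then show ?thesis using q unfolding is_protocol_def rp_def by auto
qed

lemma w_pos_split: "w q (h0 @ [a]) > 0 \<Longrightarrow> w q h0 > 0 \<and> pmf (q h0) a > 0"
  unfolding w_snoc using w_nonneg[of q h0] pmf_nonneg[of "q h0" a]
  by (simp add: zero_less_mult_iff)

lemma w_pos_set: "w q h > 0 \<Longrightarrow> is_protocol k q \<Longrightarrow> set h \<subseteq> {0..k}"
proof (induction h rule: rev_induct)
  case Nil
  then show ?case by simp
next
  case (snoc a h0)
  then have "w q h0 > 0" "pmf (q h0) a > 0" using w_pos_split by blast+
  then have "a \<in> set_pmf (q h0)" by (simp add: set_pmf_iff)
  then have "a \<in> {0..k}" using snoc.prems(2) unfolding is_protocol_def by blast
  then show ?case using snoc \<open>w q h0 > 0\<close> by auto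
qed

lemma core_i_ii:
  assumes prot: "is_protocol k (f i)"
    and min: "\<And>p. is_protocol k p \<Longrightarrow> exp_latency n f i \<le> exp_latency n (f(i:=p)) i"
  shows "w (f i) h > 0 \<Longrightarrow> exp_latency n (f(i := rp (f i) h)) i = exp_latency n f i"
proof (induction h rule: rev_induct)
  case Nil
  then show ?case by (simp only: rp_Nil fun_upd_triv)
next
  case (snoc a h0)
  define c where "c = exp_latency n f i"
  define Eb where "Eb = (\<lambda>b. exp_latency n (f(i := rp (f i) (h0@[b]))) i)"
  have pos: "w (f i) h0 > 0" "pmf (f i h0) a > 0" using w_pos_split snoc.prems by blast+
  then have aS: "a \<in> set_pmf (f i h0)" by (simp add: set_pmf_iff)
  have IH: "exp_latency n (f(i := rp (f i) h0)) i = c" using snoc.IH[OF pos(1)] unfolding c_def .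
  have cint: "c = (\<integral>\<^sup>+b. Eb b \<partial>f i h0)" using IH M_exp[of n f i "f i" h0 i] unfolding Eb_def by simp
  have ge: "c \<le> Eb b" if "b \<in> set_pmf (f i h0)" for b
  proof -
    have "set h0 \<subseteq> {0..k}" using w_pos_set[OF pos(1) prot] .
    moreover have "b \<in> {0..k}" using prot that unfolding is_protocol_def by blast
    ultimately have "is_protocol k (rp (f i) (h0@[b]))" by (intro rp_protocol prot) auto
    then show ?thesis unfolding c_def Eb_def by (rule min)
  qed
  have "Eb a \<le> c"
  proof (cases "c = \<infinity>")
    case True
    then show ?thesis by simp
  next
    case False
    have "(\<integral>\<^sup>+b. Eb b \<partial>f i h0) = (\<integral>\<^sup>+b. c + (Eb b - c) \<partial>f i h0)"
      using ge by (intro nn_integral_cong_AE) (auto simp: AE_measure_pmf_iff add_diff_inverse_ennreal)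
    with cint have "c = (\<integral>\<^sup>+b. c + (Eb b - c) \<partial>f i h0)" by (rule trans)
    also have "\<dots> = c + (\<integral>\<^sup>+b. (Eb b - c) \<partial>f i h0)"
      by (subst nn_integral_add) (auto simp: measure_pmf.emeasure_space_1)
    finally have eq: "c + 0 = c + (\<integral>\<^sup>+b. (Eb b - c) \<partial>f i h0)" by simp
    have "(Eb a - c) * ennreal (pmf (f i h0) a) = (\<integral>\<^sup>+b. (Eb a - c) * indicator {a} b \<partial>f i h0)"
      by (subst nn_integral_cmult_indicator) (auto simp: emeasure_pmf_single)
    also have "\<dots> \<le> (\<integral>\<^sup>+b. (Eb b - c) \<partial>f i h0)"
      by (intro nn_integral_mono) (auto simp: indicator_def)
    finally have "c + (Eb a - c) * ennreal (pmf (f i h0) a) \<le> c + 0"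
      using eq by (metis add_left_mono)
    then have "(Eb a - c) * ennreal (pmf (f i h0) a) \<le> 0"
      using False by (simp only: ennreal_add_left_cancel_le) simp
    then have "Eb a - c = 0" using pos(2) by (simp add: ennreal_zero_less_mult_iff le_zero_eq)
    then show ?thesis by (simp add: diff_eq_0_iff_ennreal)
  qed
  then have "Eb a = c" using ge[OF aS] by simp
  then show ?case unfolding Eb_def c_def .
qed

lemma hp_Nil: "hist_prob n F i [] = 1"
  unfolding hist_prob_def has_history_def by simp

lemma C0: "cond_latency n F i [] = exp_latency n F i"
  unfolding cond_latency_def exp_latency_def hp_Nil has_history_def by (simp add: divide_ennreal_def)

lemma replay_rp: "replay f i h = rp (f i) h"
  unfolding replay_def rp_def ..

lemma ennreal_hp: "ennreal (hist_prob n F i h) = emeasure (state_dist n F (length h)) {st. has_history i h st}"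
  unfolding hist_prob_def by (simp add: measure_pmf.emeasure_eq_measure)

lemma hp_W: "ennreal (hist_prob n f i h) = ennreal (w (f i) h) * emeasure (state_dist n (f(i := rp (f i) h)) (length h)) {st. has_history i h st}"
  using W[of h "length h" n f i "f i" "\<lambda>_. True"] unfolding ennreal_hp by (simp only: fun_upd_triv) simp

lemma cons_w: "hist_prob n f i h > 0 \<Longrightarrow> w (f i) h > 0"
proof (rule ccontr)
  assume "hist_prob n f i h > 0" "\<not> w (f i) h > 0"
  then have "w (f i) h = 0" using w_nonneg[of "f i" h] by simp
  then have "ennreal (hist_prob n f i h) = 0" using hp_W[of n f i h] by simp
  then show False using \<open>hist_prob n f i h > 0\<close> by simp
qed

lemma hp_exists:
  assumes "i < n"
  shows "\<exists>a. hist_prob n f i [a] > 0"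
proof -
  obtain a where a: "a \<in> set_pmf (f i [])" using set_pmf_not_empty by fast
  have "emeasure (state_dist n (f(i := rp (f i) [a])) 1) {st. has_history i [a] st} = 1"
  proof (rule emeasure_one_pmf)
    fix st assume st: "st \<in> set_pmf (state_dist n (f(i := rp (f i) [a])) 1)"
    define ini where "ini = ({..<n}, \<lambda>_::nat. [] :: nat list)"
    have st1: "st \<in> set_pmf (step (f(i := rp (f i) [a])) ini)" using st unfolding ini_def by simp
    have fin: "finite (fst ini)" unfolding ini_def by simp
    from set_step[OF fin st1] obtain x where
      x: "\<forall>j\<in>fst ini. x j \<in> set_pmf ((f(i := rp (f i) [a])) j (snd ini j))" and
      stx: "st = (fst ini - {i. succeeds (fst ini) x i}, \<lambda>i. if i \<in> fst ini then snd ini i @ [x i] else snd ini i)"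
      by blast
    have "i \<in> fst ini" using assms unfolding ini_def by simp
    with x have "x i \<in> set_pmf ((f(i := rp (f i) [a])) i (snd ini i))" by blast
    then have "x i \<in> set_pmf (rp (f i) [a] [])" unfolding ini_def by simp
    then have "x i = a" by (simp add: rp_def)
    then show "st \<in> {st. has_history i [a] st}" using stx assms by (simp add: has_history_def ini_def)
  qed
  moreover have "w (f i) [a] = pmf (f i []) a" unfolding w_def by simp
  ultimately have "ennreal (hist_prob n f i [a]) = ennreal (pmf (f i []) a)"
    using hp_W[of n f i "[a]"] by simp
  moreover have "pmf (f i []) a > 0" using a by (simp add: pmf_positive)
  ultimately show ?thesis by (metis ennreal_less_zero_iff)
qed

theorem lemma1:
  fixes n k :: nat and f :: "nat \<Rightarrow> protocol"
  assumes "k \<ge> 1"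
    and "\<forall>i<n. is_protocol k (f i)"
  shows "equilibrium n k f \<longleftrightarrow>
    (\<forall>i<n. \<forall>g\<in>G_set n f i.
       exp_latency n (f(i := g)) i = (INF f'\<in>{p. is_protocol k p}. exp_latency n (f(i := f')) i)
     \<and> (INF f'\<in>{p. is_protocol k p}. exp_latency n (f(i := f')) i) = exp_latency n f i)"
proof
  assume eq: "equilibrium n k f"
  show "\<forall>i<n. \<forall>g\<in>G_set n f i.
       exp_latency n (f(i := g)) i = (INF f'\<in>{p. is_protocol k p}. exp_latency n (f(i := f')) i)
     \<and> (INF f'\<in>{p. is_protocol k p}. exp_latency n (f(i := f')) i) = exp_latency n f i"
  proof (intro allI impI ballI)
    fix i g assume i: "i < n" and g: "g \<in> G_set n f i"
    have prot: "is_protocol k (f i)" using assms(2) i by blast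
    have min: "exp_latency n f i \<le> exp_latency n (f(i:=p)) i" if "is_protocol k p" for p
    proof -
      have "consistent n f i []" by (simp add: consistent_def hp_Nil)
      then have "cond_latency n f i [] \<le> cond_latency n (f(i:=p)) i []"
        using eq i that unfolding equilibrium_def by auto
      then show ?thesis by (simp only: C0)
    qed
    have INF: "(INF f'\<in>{p. is_protocol k p}. exp_latency n (f(i := f')) i) = exp_latency n f i"
    proof (rule antisym)
      have "(INF f'\<in>{p. is_protocol k p}. exp_latency n (f(i := f')) i) \<le> exp_latency n (f(i := f i)) i"
        by (rule INF_lower) (simp add: prot)
      then show "(INF f'\<in>{p. is_protocol k p}. exp_latency n (f(i := f')) i) \<le> exp_latency n f i"
        by (simp only: fun_upd_triv)
      show "exp_latency n f i \<le> (INF f'\<in>{p. is_protocol k p}. exp_latency n (f(i := f')) i)"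
        by (rule INF_greatest) (use min in auto)
    qed
    from g obtain h where h: "g = replay f i h" "consistent n f i h" unfolding G_set_def by blast
    have grp: "g = rp (f i) h" unfolding h replay_rp ..
    have "w (f i) h > 0" using cons_w h(2) unfolding consistent_def by blast
    then have "exp_latency n (f(i := rp (f i) h)) i = exp_latency n f i" using core_i_ii[OF prot min] by blast
    then show "exp_latency n (f(i := g)) i = (INF f'\<in>{p. is_protocol k p}. exp_latency n (f(i := f')) i)
     \<and> (INF f'\<in>{p. is_protocol k p}. exp_latency n (f(i := f')) i) = exp_latency n f i"
      unfolding INF grp by simp
  qed
next
  assume ii: "\<forall>i<n. \<forall>g\<in>G_set n f i.
       exp_latency n (f(i := g)) i = (INF f'\<in>{p. is_protocol k p}. exp_latency n (f(i := f')) i)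
     \<and> (INF f'\<in>{p. is_protocol k p}. exp_latency n (f(i := f')) i) = exp_latency n f i"
  show "equilibrium n k f" unfolding equilibrium_def
  proof (intro allI impI)
    fix i h g
    assume i: "i < n" and cons: "consistent n f i h"
      and gc: "is_protocol k g \<and> (\<forall>h'. length h' < length h \<longrightarrow> g h' = f i h')"
    have prot: "is_protocol k (f i)" using assms(2) i by blast
    let ?I = "(INF f'\<in>{p. is_protocol k p}. exp_latency n (f(i := f')) i)"
    obtain a where "hist_prob n f i [a] > 0" using hp_exists[OF i] by blast
    then have "replay f i [a] \<in> G_set n f i" unfolding G_set_def consistent_def by blast
    then have INF: "?I = exp_latency n f i" using ii i by blast
    have ER: "exp_latency n (f(i := rp (f i) h)) i = ?I"
    proof (cases "h = []")
      case True
      then show ?thesis using INF by (simp only: rp_Nil fun_upd_triv)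
    next
      case False
      then have "replay f i h \<in> G_set n f i" using cons unfolding G_set_def by blast
      then show ?thesis using ii i unfolding replay_rp by blast
    qed
    have "w (f i) h > 0" using cons_w cons unfolding consistent_def by blast
    then have "set h \<subseteq> {0..k}" using w_pos_set prot by blast
    then have "is_protocol k (rp g h)" using gc rp_protocol by blast
    then have "?I \<le> exp_latency n (f(i := rp g h)) i" by (intro INF_lower) simp
    then have "exp_latency n (f(i := rp (f i) h)) i \<le> exp_latency n (f(i := rp g h)) i" unfolding ER .
    then show "cond_latency n f i h \<le> cond_latency n (f(i := g)) i h"
      using core_ii_i[of h g f i n] gc by blast
  qed
qed

end
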